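(* For every $n\ge1$ and every choice of coefficients there exist a real polynomial $P$ of degree at most $2n+1$ and a real polynomial $Q$ of degree at most $[\frac{n-1}{2}]$ such that for all $u\in(0,+\infty)$, $$M(u^4+u^2)=u\,P(u)+(u^4+u^2)\,Q(u^4+u^2)\int_0^{1/\sqrt{1+u^2}}\sqrt{1-t^2}\,dt.$$
   Context: Fix an integer $n\ge 1$ and real coefficients $a^k_{i,j},b^k_{i,j}$ ($k=1,2,3,4$; $i+j\le n$), $f_k=\sum_{0\le i+j\le n}a^k_{i,j}x^iy^j$, $g_k=\sum_{0\le i+j\le n}b^k_{i,j}x^iy^j$. For $h>0$ let $u(h)=\sqrt{(\sqrt{1+4h}-1)/2}$ (the unique positive number with $u^4+u^2=h$), $\Gamma_h$ the circle $x^2+y^2=h$, and $A=(u,u^2)$, $B=(u,-u^2)$, $C=(-u,-u^2)$, $D=(-u,u^2)$. Let $\widehat{AB},\widehat{BC},\widehat{CD},\widehat{DA}$ be the arcs of $\Gamma_h$ traversed clockwise from $A$ to $B$ (through $(\sqrt h,0)$), $B$ to $C$ (through $(0,-\sqrt h)$), $C$ to $D$ (through $(-\sqrt h,0)$), $D$ to $A$ (through $(0,\sqrt h)$). Define $$M(h)=\int_{\widehat{AB}}g_1dx-f_1dy+\int_{\widehat{BC}}g_2dx-f_2dy+\int_{\widehat{CD}}g_3dx-f_3dy+\int_{\widehat{DA}}g_4dx-f_4dy,\quad h>0.$$ $[p]$ is the integer part of $p$. *)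

theory Defs
  imports "HOL-Analysis.Analysis" "HOL-Computational_Algebra.Polynomial"
begin

definition bipoly :: "(nat \<Rightarrow> nat \<Rightarrow> real) \<Rightarrow> nat \<Rightarrow> real \<Rightarrow> real \<Rightarrow> real" where
  "bipoly c n x y = (\<Sum>i\<le>n. \<Sum>j\<le>n - i. c i j * x ^ i * y ^ j)"

text \<open>u(h): the unique positive number with u^4+u^2=h.\<close>
definition uh :: "real \<Rightarrow> real" where
  "uh h = sqrt ((sqrt (1 + 4 * h) - 1) / 2)"

text \<open>Line integral of g dx - f dy along the arc of the circle x^2+y^2=h,
  parametrized by (sqrt h cos t, sqrt h sin t), traversed clockwise from
  angle t0 to angle t1 (t1 \<le> t0).\<close>
definition arc_int :: "(real \<Rightarrow> real \<Rightarrow> real) \<Rightarrow> (real \<Rightarrow> real \<Rightarrow> real) \<Rightarrow> real \<Rightarrow> real \<Rightarrow> real \<Rightarrow> real" where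
  "arc_int f g h t0 t1 =
     - integral {t1..t0} (\<lambda>t. g (sqrt h * cos t) (sqrt h * sin t) * (- sqrt h * sin t)
                              - f (sqrt h * cos t) (sqrt h * sin t) * (sqrt h * cos t))"

text \<open>Coefficients a k i j = a^k_{i,j}, b k i j = b^k_{i,j}, k = 1..4.
  The point A=(u,u^2) has polar angle arctan u =: \<alpha>; B, C, D have angles
  -\<alpha>, \<pi>+\<alpha> (= \<alpha>-\<pi>), \<pi>-\<alpha>.\<close>
definition Mfun :: "nat \<Rightarrow> (nat \<Rightarrow> nat \<Rightarrow> nat \<Rightarrow> real) \<Rightarrow> (nat \<Rightarrow> nat \<Rightarrow> nat \<Rightarrow> real) \<Rightarrow> real \<Rightarrow> real" where
  "Mfun n a b h =
     (let \<alpha> = arctan (uh h); F = (\<lambda>k. bipoly (a k) n); G = (\<lambda>k. bipoly (b k) n) in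
        arc_int (F 1) (G 1) h \<alpha> (- \<alpha>)
      + arc_int (F 2) (G 2) h (- \<alpha>) (\<alpha> - pi)
      + arc_int (F 3) (G 3) h (pi + \<alpha>) (pi - \<alpha>)
      + arc_int (F 4) (G 4) h (pi - \<alpha>) \<alpha>)"

end

theory Submission imports Defs begin

inductive gp :: "nat \<Rightarrow> (real \<Rightarrow> real \<Rightarrow> real \<Rightarrow> real) \<Rightarrow> bool" where
  gp_const: "gp 0 (\<lambda>x y h. c)"
| gp_x: "gp 1 (\<lambda>x y h. x)"
| gp_y: "gp 1 (\<lambda>x y h. y)"
| gp_h: "gp 2 (\<lambda>x y h. h)"
| gp_add: "gp m f \<Longrightarrow> gp m g \<Longrightarrow> gp m (\<lambda>x y h. f x y h + g x y h)"
| gp_mult: "gp k f \<Longrightarrow> gp l g \<Longrightarrow> gp (k + l) (\<lambda>x y h. f x y h * g x y h)"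

lemma gp_pow: "gp (k * j) (\<lambda>x y h. f x y h ^ j)" if "gp k f"
proof (induction j)
  case 0 then show ?case using gp_const[of 1] by simp
next
  case (Suc j)
  have "gp (k + k*j) (\<lambda>x y h. f x y h * f x y h ^ j)" by (rule gp_mult[OF that Suc])
  then show ?case by (simp add: algebra_simps)
qed

lemma gp_cmult: "gp m f \<Longrightarrow> gp m (\<lambda>x y h. c * f x y h)"
  using gp_mult[OF gp_const] by fastforce

lemma gp_xy: "gp (a + b) (\<lambda>x y h. x ^ a * y ^ b)"
  using gp_mult[OF gp_pow[OF gp_x, of a] gp_pow[OF gp_y, of b]] by simp

lemma deriv_xy: "((\<lambda>t. (s * cos t) ^ Suc a * (s * sin t) ^ Suc b) has_real_derivative
   (real (Suc a) * (s * cos t) ^ a * (- s * sin t) * (s * sin t) ^ Suc b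
    + (s * cos t) ^ Suc a * (real (Suc b) * (s * sin t) ^ b * (s * cos t)))) (at t)"
proof -
  have d1: "((\<lambda>t. (s * cos t) ^ Suc a) has_real_derivative (real (Suc a) * (s * cos t) ^ a * (- s * sin t))) (at t)"
    using DERIV_power_Suc[OF DERIV_cmult[OF DERIV_cos[of t]], of s a] by (simp add: algebra_simps)
  have d2: "((\<lambda>t. (s * sin t) ^ Suc b) has_real_derivative (real (Suc b) * (s * sin t) ^ b * (s * cos t))) (at t)"
    using DERIV_power_Suc[OF DERIV_cmult[OF DERIV_sin[of t]], of s b] by (simp add: algebra_simps)
  show ?thesis using DERIV_mult[OF d1 d2] by (simp add: mult.commute mult.left_commute)
qed

lemma div_comb: "(M::real) \<noteq> 0 \<Longrightarrow> X + c*Y = M*Z \<Longrightarrow> 1/M*X + c/M*Y = Z"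
  by (simp add: field_simps)

definition AD :: "nat \<Rightarrow> nat \<Rightarrow> real \<Rightarrow> (real \<Rightarrow> real \<Rightarrow> real \<Rightarrow> real) \<Rightarrow> bool" where
  "AD p q \<kappa> G \<longleftrightarrow> gp (p+q) G \<and> (odd (p+q) \<longrightarrow> \<kappa> = 0) \<and>
     (\<forall>s t. ((\<lambda>t. \<kappa> * s^(p+q) * t + G (s * cos t) (s * sin t) (s^2)) has_real_derivative
        (s^(p+q) * cos t ^ p * sin t ^ q)) (at t))"

lemma step_p:
  assumes "AD p q \<kappa> G"
  shows "AD (p+2) q (real (p+1)/real (p+q+2) * \<kappa>)
     (\<lambda>x y h. 1/real (p+q+2) * (x^(p+1) * y^(q+1)) + real (p+1)/real (p+q+2) * (h * G x y h))"
proof -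
  let ?M = "real (p+q+2)"
  have gp1: "gp (p+2+q) (\<lambda>x y h. x^(p+1) * y^(q+1))" using gp_xy[of "p+1" "q+1"] by (simp add: add.commute add.left_commute)
  have gp2: "gp (p+2+q) (\<lambda>x y h. h * G x y h)" using gp_mult[OF gp_h, of "p+q" G] assms[unfolded AD_def] by (simp add: add.commute add.left_commute)
  have "gp (p+2+q) (\<lambda>x y h. 1/(p+q+2) * (x^(p+1) * y^(q+1)) + (p+1)/(p+q+2) * (h * G x y h))"
    using gp_add[OF gp_cmult[OF gp1, of "1/(p+q+2)"] gp_cmult[OF gp2, of "(p+1)/(p+q+2)"]] by simp
  moreover have "odd (p+2+q) \<longrightarrow> (p+1)/(p+q+2) * \<kappa> = 0" using assms unfolding AD_def by auto
  moreover have "((\<lambda>t. (p+1)/(p+q+2) * \<kappa> * s^(p+2+q) * t +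
      (1/(p+q+2) * ((s * cos t)^(p+1) * (s * sin t)^(q+1)) + (p+1)/(p+q+2) * (s^2 * G (s * cos t) (s * sin t) (s^2))))
      has_real_derivative (s^(p+2+q) * cos t ^ (p+2) * sin t ^ q)) (at t)" for s t
  proof -
    have d0: "((\<lambda>t. \<kappa> * s^(p+q) * t + G (s * cos t) (s * sin t) (s^2)) has_real_derivative
        (s^(p+q) * cos t ^ p * sin t ^ q)) (at t)" using assms unfolding AD_def by blast
    have d1: "((\<lambda>t. 1/(p+q+2) * ((s * cos t)^(p+1) * (s * sin t)^(q+1)) + (p+1)/(p+q+2) * s^2 * (\<kappa> * s^(p+q) * t + G (s * cos t) (s * sin t) (s^2)))
      has_real_derivative 1/(p+q+2) * (real (p+1) * (s * cos t) ^ p * (- s * sin t) * (s * sin t) ^ (q+1)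
    + (s * cos t) ^ (p+1) * (real (q+1) * (s * sin t) ^ q * (s * cos t))) + (p+1)/(p+q+2) * (s^2 * (s^(p+q) * cos t ^ p * sin t ^ q))) (at t)"
      using DERIV_add[OF DERIV_cmult[OF deriv_xy[of s "p" "q" t], of "1/(p+q+2)"] DERIV_cmult[OF d0, of "(p+1)/(p+q+2) * s^2"]] by (simp add: mult.assoc)
    have e: "1/(p+q+2) * (real (p+1) * (s * cos t) ^ p * (- s * sin t) * (s * sin t) ^ (q+1)
    + (s * cos t) ^ (p+1) * (real (q+1) * (s * sin t) ^ q * (s * cos t))) + (p+1)/(p+q+2) * (s^2 * (s^(p+q) * cos t ^ p * sin t ^ q))
     = s^(p+2+q) * cos t ^ (p+2) * sin t ^ q"
    proof (rule div_comb)
      show "real (p+q+2) \<noteq> 0" by simp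
      have ss: "sin t ^ 2 = 1 - cos t ^ 2" by (simp add: sin_squared_eq)
      have "real (p+1) * (s * cos t) ^ p * (- s * sin t) * (s * sin t) ^ (q+1)
           = - real (p+1) * (s^(p+2+q) * cos t ^ p * sin t ^ q) * sin t ^ 2"
        by (simp add: power_mult_distrib power_add power2_eq_square algebra_simps)
      also have "\<dots> = - real (p+1) * (s^(p+2+q) * cos t ^ p * sin t ^ q) * (1 - cos t ^ 2)" by (simp add: ss)
      finally have 1: "real (p+1) * (s * cos t) ^ p * (- s * sin t) * (s * sin t) ^ (q+1)
           = - real (p+1) * (s^(p+2+q) * cos t ^ p * sin t ^ q) * (1 - cos t ^ 2)" .
      have 2: "(s * cos t) ^ (p+1) * (real (q+1) * (s * sin t) ^ q * (s * cos t))
           = real (q+1) * (s^(p+2+q) * cos t ^ p * sin t ^ q) * cos t ^ 2"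
        by (simp add: power_mult_distrib power_add power2_eq_square algebra_simps)
      have 3: "s^2 * (s^(p+q) * cos t ^ p * sin t ^ q) = s^(p+2+q) * cos t ^ p * sin t ^ q"
        by (simp add: power_add power2_eq_square algebra_simps)
      have 4: "s^(p+2+q) * cos t ^ (p+2) * sin t ^ q = (s^(p+2+q) * cos t ^ p * sin t ^ q) * cos t ^ 2"
        by (simp add: power_add power2_eq_square algebra_simps)
      show "real (p+1) * (s * cos t) ^ p * (- s * sin t) * (s * sin t) ^ (q+1)
    + (s * cos t) ^ (p+1) * (real (q+1) * (s * sin t) ^ q * (s * cos t)) + real (p+1) * (s^2 * (s^(p+q) * cos t ^ p * sin t ^ q))
     = real (p+q+2) * (s^(p+2+q) * cos t ^ (p+2) * sin t ^ q)"
        unfolding 1 2 3 4 by (simp add: algebra_simps)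
    qed
    show ?thesis using d1 unfolding e by (simp add: algebra_simps power_add power2_eq_square)
  qed
  ultimately show ?thesis unfolding AD_def by blast
qed


lemma step_q:
  assumes "AD p q \<kappa> G"
  shows "AD p (q+2) (real (q+1)/real (p+q+2) * \<kappa>)
     (\<lambda>x y h. 1/real (p+q+2) * (- (x^(p+1) * y^(q+1))) + real (q+1)/real (p+q+2) * (h * G x y h))"
proof -
  have gp1: "gp (p+(q+2)) (\<lambda>x y h. - (x^(p+1) * y^(q+1)))"
    using gp_cmult[OF gp_xy[of "p+1" "q+1"], of "-1"] by (simp add: add.commute add.left_commute)
  have gp2: "gp (p+(q+2)) (\<lambda>x y h. h * G x y h)" using gp_mult[OF gp_h, of "p+q" G] assms[unfolded AD_def] by (simp add: add.commute add.left_commute)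
  have "gp (p+(q+2)) (\<lambda>x y h. 1/real (p+q+2) * (- (x^(p+1) * y^(q+1))) + real (q+1)/real (p+q+2) * (h * G x y h))"
    using gp_add[OF gp_cmult[OF gp1, of "1/(p+q+2)"] gp_cmult[OF gp2, of "(q+1)/(p+q+2)"]] by simp
  moreover have "odd (p+(q+2)) \<longrightarrow> real (q+1)/real (p+q+2) * \<kappa> = 0" using assms unfolding AD_def by auto
  moreover have "((\<lambda>t. real (q+1)/real (p+q+2) * \<kappa> * s^(p+(q+2)) * t +
      (1/real (p+q+2) * (- ((s * cos t)^(p+1) * (s * sin t)^(q+1))) + real (q+1)/real (p+q+2) * (s^2 * G (s * cos t) (s * sin t) (s^2))))
      has_real_derivative (s^(p+(q+2)) * cos t ^ p * sin t ^ (q+2))) (at t)" for s t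
  proof -
    have d0: "((\<lambda>t. \<kappa> * s^(p+q) * t + G (s * cos t) (s * sin t) (s^2)) has_real_derivative
        (s^(p+q) * cos t ^ p * sin t ^ q)) (at t)" using assms unfolding AD_def by blast
    have d1: "((\<lambda>t. 1/(p+q+2) * (- ((s * cos t)^(p+1) * (s * sin t)^(q+1))) + (q+1)/(p+q+2) * s^2 * (\<kappa> * s^(p+q) * t + G (s * cos t) (s * sin t) (s^2)))
      has_real_derivative 1/(p+q+2) * (- (real (p+1) * (s * cos t) ^ p * (- s * sin t) * (s * sin t) ^ (q+1)
    + (s * cos t) ^ (p+1) * (real (q+1) * (s * sin t) ^ q * (s * cos t)))) + (q+1)/(p+q+2) * (s^2 * (s^(p+q) * cos t ^ p * sin t ^ q))) (at t)"
      using DERIV_add[OF DERIV_cmult[OF DERIV_minus[OF deriv_xy[of s "p" "q" t]], of "1/(p+q+2)"] DERIV_cmult[OF d0, of "(q+1)/(p+q+2) * s^2"]] by (simp add: mult.assoc)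
    have e: "1/(p+q+2) * (- (real (p+1) * (s * cos t) ^ p * (- s * sin t) * (s * sin t) ^ (q+1)
    + (s * cos t) ^ (p+1) * (real (q+1) * (s * sin t) ^ q * (s * cos t)))) + (q+1)/(p+q+2) * (s^2 * (s^(p+q) * cos t ^ p * sin t ^ q))
     = s^(p+(q+2)) * cos t ^ p * sin t ^ (q+2)"
    proof (rule div_comb)
      show "real (p+q+2) \<noteq> 0" by simp
      have cc: "cos t ^ 2 = 1 - sin t ^ 2" by (simp add: cos_squared_eq)
      have 1: "real (p+1) * (s * cos t) ^ p * (- s * sin t) * (s * sin t) ^ (q+1)
           = - real (p+1) * (s^(p+2+q) * cos t ^ p * sin t ^ q) * sin t ^ 2"
        by (simp add: power_mult_distrib power_add power2_eq_square algebra_simps)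
      have "(s * cos t) ^ (p+1) * (real (q+1) * (s * sin t) ^ q * (s * cos t))
           = real (q+1) * (s^(p+2+q) * cos t ^ p * sin t ^ q) * cos t ^ 2"
        by (simp add: power_mult_distrib power_add power2_eq_square algebra_simps)
      also have "\<dots> = real (q+1) * (s^(p+2+q) * cos t ^ p * sin t ^ q) * (1 - sin t ^ 2)" by (simp add: cc)
      finally have 2: "(s * cos t) ^ (p+1) * (real (q+1) * (s * sin t) ^ q * (s * cos t))
           = real (q+1) * (s^(p+2+q) * cos t ^ p * sin t ^ q) * (1 - sin t ^ 2)" .
      have 3: "s^2 * (s^(p+q) * cos t ^ p * sin t ^ q) = s^(p+2+q) * cos t ^ p * sin t ^ q"
        by (simp add: power_add power2_eq_square algebra_simps)
      have 4: "s^(p+(q+2)) * cos t ^ p * sin t ^ (q+2) = (s^(p+2+q) * cos t ^ p * sin t ^ q) * sin t ^ 2"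
        by (simp add: power_add power2_eq_square algebra_simps)
      show "- (real (p+1) * (s * cos t) ^ p * (- s * sin t) * (s * sin t) ^ (q+1)
    + (s * cos t) ^ (p+1) * (real (q+1) * (s * sin t) ^ q * (s * cos t))) + real (q+1) * (s^2 * (s^(p+q) * cos t ^ p * sin t ^ q))
     = real (p+q+2) * (s^(p+(q+2)) * cos t ^ p * sin t ^ (q+2))"
        unfolding 1 2 3 4 by (simp add: algebra_simps)
    qed
    show ?thesis using d1 unfolding e by (simp add: algebra_simps power_add power2_eq_square)
  qed
  ultimately show ?thesis unfolding AD_def by blast
qed

lemma AD_00: "AD 0 0 1 (\<lambda>x y h. 0)"
  unfolding AD_def using gp_const[of 0] by (auto intro!: derivative_eq_intros)

lemma AD_10: "AD 1 0 0 (\<lambda>x y h. y)"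
  unfolding AD_def using gp_y by (auto intro!: derivative_eq_intros)

lemma AD_01: "AD 0 1 0 (\<lambda>x y h. - x)"
  unfolding AD_def using gp_cmult[OF gp_x, of "-1"] by (auto intro!: derivative_eq_intros)

lemma AD_11: "AD 1 1 0 (\<lambda>x y h. 1/2 * (y * y))"
proof -
  have "gp (1+1) (\<lambda>x y h. 1/2 * (y * y))" by (rule gp_cmult[OF gp_mult[OF gp_y gp_y]])
  then show ?thesis unfolding AD_def by (auto intro!: derivative_eq_intros simp: algebra_simps)
qed

lemma nat_induct2': "P (n::nat)" if "P 0" "P 1" "\<And>n. P n \<Longrightarrow> P (n+2)"
proof (induction n rule: less_induct)
  case (less n)
  show ?case
  proof (cases "n < 2")
    case True
    then have "n = 0 \<or> n = 1" by auto
    then show ?thesis using that by auto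
  next
    case False
    then obtain m where m: "n = m + 2" by (metis add.commute le_Suc_ex not_less)
    then have "P m" using less by simp
    then show ?thesis using that m by simp
  qed
qed

lemma AD_exists: "\<exists>\<kappa> G. AD p q \<kappa> G"
proof (induction p rule: nat_induct2')
  case 1
  show ?case
  proof (induction q rule: nat_induct2')
    case 1 then show ?case using AD_00 by blast
  next
    case 2 then show ?case using AD_01 by blast
  next
    case (3 n) then show ?case using step_q by blast
  qed
next
  case 2
  show ?case
  proof (induction q rule: nat_induct2')
    case 1 then show ?case using AD_10 by blast
  next
    case 2 then show ?case using AD_11 by blast
  next
    case (3 n) then show ?case using step_q by blast
  qed
next
  case (3 n) then show ?case using step_p by blast
qed


lemma gp_eval:
  assumes "gp m G" "degree X \<le> 2" "poly X 0 = 0" "degree Y \<le> 2" "poly Y 0 = 0"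
    "degree H \<le> 4" "poly H 0 = 0"
  shows "\<exists>R. degree R \<le> 2*m \<and> (m \<ge> 1 \<longrightarrow> poly R 0 = 0) \<and>
     (\<forall>u. G (poly X u) (poly Y u) (poly H u) = poly R u)"
  using assms(1)
proof induction
  case (gp_const c)
  show ?case by (rule exI[of _ "[:c:]"]) simp
next
  case gp_x show ?case using assms by (intro exI[of _ X]) auto
next
  case gp_y show ?case using assms by (intro exI[of _ Y]) auto
next
  case gp_h show ?case using assms by (intro exI[of _ H]) auto
next
  case (gp_add m f g)
  then obtain R1 R2 where "degree R1 \<le> 2*m \<and> (m \<ge> 1 \<longrightarrow> poly R1 0 = 0) \<and> (\<forall>u. f (poly X u) (poly Y u) (poly H u) = poly R1 u)"
    "degree R2 \<le> 2*m \<and> (m \<ge> 1 \<longrightarrow> poly R2 0 = 0) \<and> (\<forall>u. g (poly X u) (poly Y u) (poly H u) = poly R2 u)" by blast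
  then show ?case
    by (intro exI[of _ "R1 + R2"]) (auto intro: order.trans[OF degree_add_le])
next
  case (gp_mult k f l g)
  then obtain R1 R2 where R1: "degree R1 \<le> 2*k \<and> (k \<ge> 1 \<longrightarrow> poly R1 0 = 0) \<and> (\<forall>u. f (poly X u) (poly Y u) (poly H u) = poly R1 u)"
    and R2: "degree R2 \<le> 2*l \<and> (l \<ge> 1 \<longrightarrow> poly R2 0 = 0) \<and> (\<forall>u. g (poly X u) (poly Y u) (poly H u) = poly R2 u)" by blast
  have "degree R1 \<le> 2*k" "degree R2 \<le> 2*l" using R1 R2 by auto
  then have "degree (R1 * R2) \<le> 2*(k+l)" using degree_mult_le[of R1 R2] by (simp add: distrib_left)
  moreover have "k + l \<ge> 1 \<longrightarrow> poly (R1*R2) 0 = 0" using R1 R2 by auto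
  ultimately show ?case using R1 R2 by (intro exI[of _ "R1 * R2"]) auto
qed

definition good :: "nat \<Rightarrow> (real \<Rightarrow> real) \<Rightarrow> bool" where
  "good N f \<longleftrightarrow> (\<exists>R Q1 Q2. degree R \<le> 2*N \<and> poly R 0 = 0 \<and> degree Q1 \<le> N div 2 - 1 \<and>
     degree Q2 \<le> N div 2 - 1 \<and> (\<forall>u>0. f u = poly R u + (u^4+u^2) * poly Q1 (u^4+u^2) * arctan u
        + (u^4+u^2) * poly Q2 (u^4+u^2)))"

lemma good_zero: "good N (\<lambda>u. 0)"
  unfolding good_def by (rule exI[of _ 0], rule exI[of _ 0], rule exI[of _ 0]) simp

lemma good_add: assumes "good N f" "good N g" shows "good N (\<lambda>u. f u + g u)"
proof -
  obtain R Q1 Q2 where A: "degree R \<le> 2*N" "poly R 0 = 0" "degree Q1 \<le> N div 2 - 1"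
     "degree Q2 \<le> N div 2 - 1" "\<forall>u>0. f u = poly R u + (u^4+u^2) * poly Q1 (u^4+u^2) * arctan u
        + (u^4+u^2) * poly Q2 (u^4+u^2)" using assms(1) unfolding good_def by blast
  obtain R' Q1' Q2' where B: "degree R' \<le> 2*N" "poly R' 0 = 0" "degree Q1' \<le> N div 2 - 1"
     "degree Q2' \<le> N div 2 - 1" "\<forall>u>0. g u = poly R' u + (u^4+u^2) * poly Q1' (u^4+u^2) * arctan u
        + (u^4+u^2) * poly Q2' (u^4+u^2)" using assms(2) unfolding good_def by blast
  show ?thesis unfolding good_def
    apply (rule exI[of _ "R + R'"], rule exI[of _ "Q1 + Q1'"], rule exI[of _ "Q2 + Q2'"])
    using A B by (auto intro: order.trans[OF degree_add_le] simp: algebra_simps)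
qed

lemma good_cmult: assumes "good N f" shows "good N (\<lambda>u. c * f u)"
proof -
  obtain R Q1 Q2 where A: "degree R \<le> 2*N" "poly R 0 = 0" "degree Q1 \<le> N div 2 - 1"
     "degree Q2 \<le> N div 2 - 1" "\<forall>u>0. f u = poly R u + (u^4+u^2) * poly Q1 (u^4+u^2) * arctan u
        + (u^4+u^2) * poly Q2 (u^4+u^2)" using assms(1) unfolding good_def by blast
  show ?thesis unfolding good_def
    apply (rule exI[of _ "smult c R"], rule exI[of _ "smult c Q1"], rule exI[of _ "smult c Q2"])
    using A by (auto intro: order.trans[OF degree_smult_le] simp: algebra_simps)
qed

lemma good_sum: "finite I \<Longrightarrow> (\<And>i. i \<in> I \<Longrightarrow> good N (f i)) \<Longrightarrow> good N (\<lambda>u. \<Sum>i\<in>I. f i u)"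
proof (induction I rule: finite_induct)
  case empty then show ?case using good_zero by simp
next
  case (insert x F) then show ?case using good_add[of N "f x" "\<lambda>u. \<Sum>i\<in>F. f i u"] by simp
qed

lemma good_mono: assumes "good N f" "N \<le> N'" shows "good N' f"
proof -
  have "N div 2 - 1 \<le> N' div 2 - 1" using assms(2) by (simp add: diff_le_mono div_le_mono)
  then show ?thesis using assms unfolding good_def by (meson mult_le_mono2 order_trans)
qed

lemma good_cong: assumes "good N f" "\<And>u. u > 0 \<Longrightarrow> f u = g u" shows "good N g"
  using assms unfolding good_def by auto

lemma sqrt_h: "u > 0 \<Longrightarrow> sqrt (u^4+u^2) = u * sqrt (1 + u^2)"
proof -
  assume u: "u > 0"
  have "u^4+u^2 = u^2 * (1 + u^2)" by (simp add: algebra_simps power2_eq_square power4_eq_xxxx)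
  then show ?thesis using u by (simp add: real_sqrt_mult)
qed

lemma mono_good:
  fixes T0 T1 :: "real \<Rightarrow> real" and XA YA XB YB :: "real poly"
  assumes m: "p + q \<ge> 1"
    and ord: "\<And>u. u > 0 \<Longrightarrow> T1 u \<le> T0 u"
    and dif: "\<And>u. u > 0 \<Longrightarrow> T0 u - T1 u = ka * arctan u + kb"
    and en0: "\<And>u. u > 0 \<Longrightarrow> sqrt (u^4+u^2) * cos (T0 u) = poly XA u \<and> sqrt (u^4+u^2) * sin (T0 u) = poly YA u"
    and en1: "\<And>u. u > 0 \<Longrightarrow> sqrt (u^4+u^2) * cos (T1 u) = poly XB u \<and> sqrt (u^4+u^2) * sin (T1 u) = poly YB u"
    and dX0: "degree XA \<le> 2" "poly XA 0 = 0" and dY0: "degree YA \<le> 2" "poly YA 0 = 0"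
    and dX1: "degree XB \<le> 2" "poly XB 0 = 0" and dY1: "degree YB \<le> 2" "poly YB 0 = 0"
  shows "good (p+q) (\<lambda>u. integral {T1 u..T0 u} (\<lambda>t. sqrt (u^4+u^2)^(p+q) * cos t ^ p * sin t ^ q))"
proof -
  obtain \<kappa> G where AD: "AD p q \<kappa> G" using AD_exists by blast
  let ?H = "[:0,0,1,0,1:] :: real poly"
  have H: "poly ?H u = u^4+u^2" for u by (simp add: algebra_simps power2_eq_square power4_eq_xxxx)
  have dH: "degree ?H \<le> 4" "poly ?H 0 = 0" by simp_all
  have gpG: "gp (p+q) G" using AD unfolding AD_def by blast
  obtain R0 where R0: "degree R0 \<le> 2*(p+q)" "p+q \<ge> 1 \<longrightarrow> poly R0 0 = 0"
     "\<forall>u. G (poly XA u) (poly YA u) (poly ?H u) = poly R0 u"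
    using gp_eval[OF gpG dX0 dY0 dH] by blast
  obtain R1 where R1: "degree R1 \<le> 2*(p+q)" "p+q \<ge> 1 \<longrightarrow> poly R1 0 = 0"
     "\<forall>u. G (poly XB u) (poly YB u) (poly ?H u) = poly R1 u"
    using gp_eval[OF gpG dX1 dY1 dH] by blast
  define k where "k = (p+q) div 2"
  obtain Q1 Q2 :: "real poly" where Q: "degree Q1 \<le> (p+q) div 2 - 1" "degree Q2 \<le> (p+q) div 2 - 1"
    "\<And>u. u > 0 \<Longrightarrow> \<kappa> * sqrt (u^4+u^2)^(p+q) * (ka * arctan u + kb)
        = (u^4+u^2) * poly Q1 (u^4+u^2) * arctan u + (u^4+u^2) * poly Q2 (u^4+u^2)"
  proof (cases "odd (p+q)")
    case True
    then have "\<kappa> = 0" using AD unfolding AD_def by blast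
    then show ?thesis using that[of 0 0] by simp
  next
    case False
    have pq: "p + q = 2 * k" "k \<ge> 1" using m False unfolding k_def by presburger+
    have "\<kappa> * sqrt (u^4+u^2)^(p+q) * (ka * arctan u + kb)
        = (u^4+u^2) * poly (monom (\<kappa>*ka) (k-1)) (u^4+u^2) * arctan u + (u^4+u^2) * poly (monom (\<kappa>*kb) (k-1)) (u^4+u^2)"
      for u
    proof -
      have "sqrt (u^4+u^2)^(p+q) = (u^4+u^2)^k"
        unfolding pq power_mult by (simp add: add_nonneg_nonneg)
      also have "\<dots> = (u^4+u^2) * (u^4+u^2)^(k-1)" using pq(2)
        by (metis Suc_diff_le diff_Suc_1 power_Suc)
      finally show ?thesis by (simp add: poly_monom algebra_simps)
    qed
    then show ?thesis using that[of "monom (\<kappa>*ka) (k-1)" "monom (\<kappa>*kb) (k-1)"]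
      by (simp add: degree_monom_le k_def)
  qed
  show ?thesis unfolding good_def
  proof (intro exI conjI allI impI)
    show "degree (R0 - R1) \<le> 2*(p+q)" using R0 R1 by (meson degree_diff_le)
    show "poly (R0 - R1) 0 = 0" using R0 R1 m by simp
    show "degree Q1 \<le> (p+q) div 2 - 1" "degree Q2 \<le> (p+q) div 2 - 1" by (fact Q)+
    fix u :: real assume u: "u > 0"
    define s where "s = sqrt (u^4+u^2)"
    have s2: "s^2 = u^4+u^2" unfolding s_def by simp
    define F where "F t = \<kappa> * s^(p+q) * t + G (s * cos t) (s * sin t) (s^2)" for t
    have "((\<lambda>t. s^(p+q) * cos t ^ p * sin t ^ q) has_integral (F (T0 u) - F (T1 u))) {T1 u..T0 u}"
    proof (rule fundamental_theorem_of_calculus)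
      show "T1 u \<le> T0 u" using ord u by blast
      fix t assume "t \<in> {T1 u..T0 u}"
      have "(F has_real_derivative (s^(p+q) * cos t ^ p * sin t ^ q)) (at t)"
        using AD unfolding AD_def F_def by blast
      then show "(F has_vector_derivative (s^(p+q) * cos t ^ p * sin t ^ q)) (at t within {T1 u..T0 u})"
        using has_real_derivative_iff_has_vector_derivative has_vector_derivative_at_within by blast
    qed
    then have I: "integral {T1 u..T0 u} (\<lambda>t. s^(p+q) * cos t ^ p * sin t ^ q) = F (T0 u) - F (T1 u)"
      by (rule integral_unique)
    have "F (T0 u) - F (T1 u) = \<kappa> * s^(p+q) * (T0 u - T1 u) + (poly R0 u - poly R1 u)"
      using en0[OF u] en1[OF u] R0(3) R1(3) H unfolding F_def s2 s_def by (simp add: algebra_simps)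
    also have "\<dots> = poly (R0 - R1) u + (u^4+u^2) * poly Q1 (u^4+u^2) * arctan u + (u^4+u^2) * poly Q2 (u^4+u^2)"
      using Q(3)[OF u] dif[OF u] unfolding s_def by simp
    finally show "integral {T1 u..T0 u} (\<lambda>t. sqrt (u^4+u^2)^(p+q) * cos t ^ p * sin t ^ q)
      = poly (R0 - R1) u + (u^4+u^2) * poly Q1 (u^4+u^2) * arctan u + (u^4+u^2) * poly Q2 (u^4+u^2)"
      using I unfolding s_def by simp
  qed
qed


lemma cont_int: "(\<lambda>t. (K::real) * cos t ^ p * sin t ^ q) integrable_on {a..b}"
  by (rule integrable_continuous_interval) (intro continuous_intros)

lemma arc_good:
  fixes T0 T1 :: "real \<Rightarrow> real" and XA YA XB YB :: "real poly"
  assumes ord: "\<And>u. u > 0 \<Longrightarrow> T1 u \<le> T0 u"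
    and dif: "\<And>u. u > 0 \<Longrightarrow> T0 u - T1 u = ka * arctan u + kb"
    and en0: "\<And>u. u > 0 \<Longrightarrow> sqrt (u^4+u^2) * cos (T0 u) = poly XA u \<and> sqrt (u^4+u^2) * sin (T0 u) = poly YA u"
    and en1: "\<And>u. u > 0 \<Longrightarrow> sqrt (u^4+u^2) * cos (T1 u) = poly XB u \<and> sqrt (u^4+u^2) * sin (T1 u) = poly YB u"
    and dX0: "degree XA \<le> 2" "poly XA 0 = 0" and dY0: "degree YA \<le> 2" "poly YA 0 = 0"
    and dX1: "degree XB \<le> 2" "poly XB 0 = 0" and dY1: "degree YB \<le> 2" "poly YB 0 = 0"
  shows "good (n+1) (\<lambda>u. arc_int (bipoly c n) (bipoly d n) (u^4+u^2) (T0 u) (T1 u))"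
proof -
  define V where "V p q u = integral {T1 u..T0 u} (\<lambda>t. sqrt (u^4+u^2)^(p+q) * cos t ^ p * sin t ^ q)" for p q u
  have Vg: "good (n+1) (V p q)" if "1 \<le> p+q" "p+q \<le> n+1" for p q
    using good_mono[OF mono_good[OF that(1) ord dif en0 en1 dX0 dY0 dX1 dY1] that(2)] unfolding V_def .
  have "good (n+1) (\<lambda>u. \<Sum>i\<le>n. \<Sum>j\<le>n-i. d i j * V i (Suc j) u + c i j * V (Suc i) j u)"
    by (intro good_sum good_add good_cmult Vg) auto
  then show ?thesis
  proof (rule good_cong)
    fix u :: real assume u: "u > 0"
    define s where "s = sqrt (u^4+u^2)"
    define mo where "mo p q t = s^(p+q) * cos t ^ p * sin t ^ q" for p q t
    have int: "mo p q integrable_on {T1 u..T0 u}" for p q unfolding mo_def by (rule cont_int)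
    have eq: "bipoly d n (s * cos t) (s * sin t) * (- s * sin t) - bipoly c n (s * cos t) (s * sin t) * (s * cos t)
      = (\<Sum>i\<le>n. \<Sum>j\<le>n-i. - (d i j * mo i (Suc j) t) - c i j * mo (Suc i) j t)" for t
    proof -
      have "bipoly d n (s * cos t) (s * sin t) * (- s * sin t) - bipoly c n (s * cos t) (s * sin t) * (s * cos t)
        = (\<Sum>i\<le>n. \<Sum>j\<le>n-i. d i j * (s * cos t) ^ i * (s * sin t) ^ j * (- s * sin t) - c i j * (s * cos t) ^ i * (s * sin t) ^ j * (s * cos t))"
        unfolding bipoly_def sum_distrib_right sum_subtractf[symmetric] by simp
      also have "\<dots> = (\<Sum>i\<le>n. \<Sum>j\<le>n-i. - (d i j * mo i (Suc j) t) - c i j * mo (Suc i) j t)"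
        unfolding mo_def by (intro sum.cong refl) (simp add: power_mult_distrib power_add algebra_simps)
      finally show ?thesis .
    qed
    have "arc_int (bipoly c n) (bipoly d n) (u^4+u^2) (T0 u) (T1 u)
       = - integral {T1 u..T0 u} (\<lambda>t. \<Sum>i\<le>n. \<Sum>j\<le>n-i. - (d i j * mo i (Suc j) t) - c i j * mo (Suc i) j t)"
      unfolding arc_int_def s_def[symmetric] eq by simp
    also have "\<dots> = - (\<Sum>i\<le>n. \<Sum>j\<le>n-i. integral {T1 u..T0 u} (\<lambda>t. - (d i j * mo i (Suc j) t) - c i j * mo (Suc i) j t))"
    proof -
      have ii: "(\<lambda>t. - (d i j * mo i (Suc j) t) - c i j * mo (Suc i) j t) integrable_on {T1 u..T0 u}" for i j
        unfolding mo_def by (rule integrable_continuous_interval) (intro continuous_intros)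
      have i2: "(\<lambda>t. \<Sum>j\<le>n-i. - (d i j * mo i (Suc j) t) - c i j * mo (Suc i) j t) integrable_on {T1 u..T0 u}" for i
        by (rule integrable_sum) (use ii in auto)
      show ?thesis
        by (subst integral_sum) (use i2 in auto, subst integral_sum, use ii in auto)
    qed
    also have "\<dots> = (\<Sum>i\<le>n. \<Sum>j\<le>n-i. d i j * V i (Suc j) u + c i j * V (Suc i) j u)"
    proof -
      have "integral {T1 u..T0 u} (\<lambda>t. - (d i j * mo i (Suc j) t) - c i j * mo (Suc i) j t)
        = - (d i j * V i (Suc j) u + c i j * V (Suc i) j u)" for i j
      proof -
        have "integral {T1 u..T0 u} (\<lambda>t. - (d i j * mo i (Suc j) t) - c i j * mo (Suc i) j t)
          = integral {T1 u..T0 u} (\<lambda>t. - (d i j * mo i (Suc j) t)) - integral {T1 u..T0 u} (\<lambda>t. c i j * mo (Suc i) j t)"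
          by (rule integral_diff; unfold mo_def; rule integrable_continuous_interval; intro continuous_intros)
        then show ?thesis unfolding V_def mo_def s_def by simp
      qed
      then show ?thesis by (simp add: sum_subtractf sum_negf sum.distrib)
    qed
    finally show "(\<Sum>i\<le>n. \<Sum>j\<le>n-i. d i j * V i (Suc j) u + c i j * V (Suc i) j u) = arc_int (bipoly c n) (bipoly d n) (u^4+u^2) (T0 u) (T1 u)" by simp
  qed
qed


lemma ends: "u > 0 \<Longrightarrow> sqrt (u^4+u^2) * cos (arctan u) = u \<and> sqrt (u^4+u^2) * sin (arctan u) = u^2"
proof -
  assume u: "u > 0"
  have "0 < 1 + u^2" by (simp add: add_pos_nonneg)
  then have p: "sqrt (1 + u^2) > 0" by simp
  show ?thesis unfolding sqrt_h[OF u] cos_arctan sin_arctan using p by (simp add: power2_eq_square)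
qed

lemma uh_h: "u > 0 \<Longrightarrow> uh (u^4+u^2) = u"
proof -
  assume u: "u > 0"
  have "1 + 4 * (u^4+u^2) = (2*u^2+1)^2" by (simp add: algebra_simps power2_eq_square power4_eq_xxxx)
  then have "sqrt (1 + 4 * (u^4+u^2)) = 2*u^2+1" by simp
  then show ?thesis unfolding uh_def using u by simp
qed

lemma M_good: "good (n+1) (\<lambda>u. Mfun n a b (u^4+u^2))"
proof -
  have ap: "\<And>u. u > 0 \<Longrightarrow> 0 < arctan u \<and> arctan u < pi/2" using arctan_ubound by simp
  have ap2: "2 * arctan u \<le> pi" if "u > 0" for u using arctan_ubound[of u] by linarith
  have E: "\<And>u. u > 0 \<Longrightarrow> sqrt (u^4+u^2) * cos (arctan u) = u \<and> sqrt (u^4+u^2) * sin (arctan u) = u^2" by (rule ends)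
  have g1: "good (n+1) (\<lambda>u. arc_int (bipoly (a 1) n) (bipoly (b 1) n) (u^4+u^2) (arctan u) (- arctan u))"
    by (rule arc_good[where ka=2 and kb=0 and XA="[:0,1:]" and YA="[:0,0,1:]" and XB="[:0,1:]" and YB="[:0,0,-1:]"])
       (use ap ap2 E in \<open>auto simp: power2_eq_square\<close>)
  have g2: "good (n+1) (\<lambda>u. arc_int (bipoly (a 2) n) (bipoly (b 2) n) (u^4+u^2) (- arctan u) (arctan u - pi))"
    by (rule arc_good[where ka="-2" and kb=pi and XA="[:0,1:]" and YA="[:0,0,-1:]" and XB="[:0,-1:]" and YB="[:0,0,-1:]"])
       (use ap ap2 E in \<open>auto simp: power2_eq_square cos_diff sin_diff\<close>)
  have g3: "good (n+1) (\<lambda>u. arc_int (bipoly (a 3) n) (bipoly (b 3) n) (u^4+u^2) (pi + arctan u) (pi - arctan u))"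
    by (rule arc_good[where ka=2 and kb=0 and XA="[:0,-1:]" and YA="[:0,0,-1:]" and XB="[:0,-1:]" and YB="[:0,0,1:]"])
       (use ap ap2 E in \<open>auto simp: power2_eq_square cos_diff sin_diff cos_add sin_add\<close>)
  have g4: "good (n+1) (\<lambda>u. arc_int (bipoly (a 4) n) (bipoly (b 4) n) (u^4+u^2) (pi - arctan u) (arctan u))"
    by (rule arc_good[where ka="-2" and kb=pi and XA="[:0,-1:]" and YA="[:0,0,1:]" and XB="[:0,1:]" and YB="[:0,0,1:]"])
       (use ap ap2 E in \<open>auto simp: power2_eq_square cos_diff sin_diff\<close>)
  show ?thesis
    by (rule good_cong[OF good_add[OF good_add[OF good_add[OF g1 g2] g3] g4]])
       (simp add: Mfun_def Let_def uh_h)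
qed

lemma I_val:
  assumes u: "u > 0"
  shows "integral {0..1 / sqrt (1 + u^2)} (\<lambda>t. sqrt (1 - t^2)) = (pi/2 - arctan u)/2 + u/(2*(1+u^2))"
proof -
  define c where "c = 1 / sqrt (1 + u^2)"
  have sp: "sqrt (1 + u^2) > 1" using u by (intro real_less_rsqrt) simp
  have pos1: "0 < 1 + u^2" by (simp add: add_pos_nonneg)
  have c0: "0 < c" "c < 1" unfolding c_def using sp pos1 by (auto simp: field_simps)
  define \<Phi> where "\<Phi> t = (arcsin t + t * sqrt (1 - t^2)) / 2" for t
  have "((\<lambda>t. sqrt (1 - t^2)) has_integral (\<Phi> c - \<Phi> 0)) {0..c}"
  proof (rule fundamental_theorem_of_calculus)
    show "0 \<le> c" using c0 by simp
    fix t assume t: "t \<in> {0..c}"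
    then have t1: "-1 < t" "t < 1" using c0 by auto
    then have "t^2 < 1" by (simp add: abs_square_less_1 abs_less_iff)
    then have pos: "1 - t^2 > 0" by simp
    have sq: "sqrt (1 - t^2) ^ 2 = 1 - t^2" using pos by simp
    have sqp: "sqrt (1 - t^2) > 0" using pos by simp
    have "(\<Phi> has_real_derivative (inverse (sqrt (1 - t^2)) + (sqrt (1 - t^2) + t * (inverse (sqrt (1 - t^2)) / 2 * (- (2 * t))))) / 2) (at t)"
      unfolding \<Phi>_def using t1 pos
      by (auto intro!: derivative_eq_intros simp: power2_eq_square)
    moreover have "(inverse (sqrt (1 - t^2)) + (sqrt (1 - t^2) + t * (inverse (sqrt (1 - t^2)) / 2 * (- (2 * t))))) / 2 = sqrt (1 - t^2)"
    proof -
      have "inverse (sqrt (1 - t^2)) - t * t * inverse (sqrt (1 - t^2)) = (1 - t * t) * inverse (sqrt (1 - t^2))"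
        by (simp add: algebra_simps)
      also have "\<dots> = (1 - t^2) / sqrt (1 - t^2)" by (simp add: divide_inverse power2_eq_square)
      also have "\<dots> = sqrt (1 - t^2)" using sqp sq by (simp add: field_simps power2_eq_square)
      finally show ?thesis by (simp add: algebra_simps)
    qed
    ultimately show "(\<Phi> has_vector_derivative sqrt (1 - t^2)) (at t within {0..c})"
      using has_real_derivative_iff_has_vector_derivative has_vector_derivative_at_within by metis
  qed
  then have I: "integral {0..c} (\<lambda>t. sqrt (1 - t^2)) = \<Phi> c - \<Phi> 0" by (rule integral_unique)
  have cc: "c = sin (pi/2 - arctan u)" unfolding c_def by (simp add: sin_diff cos_arctan)
  have as: "arcsin c = pi/2 - arctan u"
  proof -
    have a0: "0 \<le> arctan u" using u by simp
    show ?thesis unfolding cc using arctan_ubound[of u] a0 by (intro arcsin_sin) linarith+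
  qed
  have "1 - c^2 = (u / sqrt (1 + u^2))^2" unfolding c_def
    using pos1 by (simp add: power_divide field_simps)
  then have "sqrt (1 - c^2) = u / sqrt (1 + u^2)" using u by simp
  then have "c * sqrt (1 - c^2) = u / (1 + u^2)" unfolding c_def
    by (simp add: power2_eq_square[symmetric])
  then have "\<Phi> c - \<Phi> 0 = (pi/2 - arctan u)/2 + u/(2*(1+u^2))" unfolding \<Phi>_def as using pos1 by (simp add: field_simps)
  then show ?thesis using I unfolding c_def by simp
qed


lemma deg_part:
  fixes R Q1 Q2 :: "real poly"
  assumes n: "n \<ge> 1" and G: "degree R \<le> 2*(n+1)" "poly R 0 = 0" "degree Q1 \<le> (n+1) div 2 - 1"
     "degree Q2 \<le> (n+1) div 2 - 1"
  shows "\<exists>P. degree P \<le> 2*n+1 \<and> (\<forall>u. u * poly P u = poly R u + (u^4+u^2) * poly Q1 (u^4+u^2) * (pi/2)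
      + u^3 * poly Q1 (u^4+u^2) + (u^4+u^2) * poly Q2 (u^4+u^2))"
proof -
  define H :: "real poly" where "H = [:0,0,1,0,1:]"
  have Hp: "poly H u = u^4+u^2" for u unfolding H_def by (simp add: algebra_simps power2_eq_square power4_eq_xxxx)
  have dH: "degree H = 4" unfolding H_def by simp
  define T where "T = R + smult (pi/2) (H * pcompose Q1 H) + [:0,0,0,1:] * pcompose Q1 H + H * pcompose Q2 H"
  have T0: "poly T 0 = 0" unfolding T_def using G(2) by (simp add: poly_pcompose Hp)
  then have "[:- 0, 1:] dvd T" using poly_eq_0_iff_dvd by blast
  then obtain P where TP: "T = [:0, 1:] * P" by (auto elim: dvdE)
  define k where "k = (n+1) div 2"
  have k: "4 * k \<le> 2 * n + 2" "k \<ge> 1" using n unfolding k_def by auto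
  have dc1: "degree (pcompose Q1 H) \<le> 4 * (k - 1)" unfolding degree_pcompose dH using G(3) k_def by simp
  have dc2: "degree (pcompose Q2 H) \<le> 4 * (k - 1)" unfolding degree_pcompose dH using G(4) k_def by simp
  have d1: "degree (H * pcompose Q1 H) \<le> 2*n+2"
    using degree_mult_le[of H "pcompose Q1 H"] dc1 dH k by linarith
  have d2: "degree ([:0,0,0,1:] * pcompose Q1 H) \<le> 2*n+2"
    using degree_mult_le[of "[:0,0,0,1:]::real poly" "pcompose Q1 H"] dc1 k by simp
  have d3: "degree (H * pcompose Q2 H) \<le> 2*n+2"
    using degree_mult_le[of H "pcompose Q2 H"] dc2 dH k by linarith
  have d4: "degree (smult (pi/2) (H * pcompose Q1 H)) \<le> 2*n+2" using d1 degree_smult_le order_trans by blast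
  have dR: "degree R \<le> 2*n+2" using G(1) by simp
  have dT: "degree T \<le> 2*n+2" unfolding T_def
    by (intro degree_add_le dR d2 d3 d4)
  have dP: "degree P \<le> 2*n+1"
  proof (cases "P = 0")
    case True then show ?thesis by simp
  next
    case False
    then have "degree T = 1 + degree P" unfolding TP by (subst degree_mult_eq) auto
    then show ?thesis using dT by simp
  qed
  have "u * poly P u = poly R u + (u^4+u^2) * poly Q1 (u^4+u^2) * (pi/2)
      + u^3 * poly Q1 (u^4+u^2) + (u^4+u^2) * poly Q2 (u^4+u^2)" for u
  proof -
    have "u * poly P u = poly T u" unfolding TP by simp
    then show ?thesis unfolding T_def by (simp add: poly_pcompose Hp algebra_simps power3_eq_cube)
  qed
  then show ?thesis using dP by blast
qed

theorem mainTheorem9: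
  fixes n :: nat and a b :: "nat \<Rightarrow> nat \<Rightarrow> nat \<Rightarrow> real"
  assumes "n \<ge> 1"
  shows "\<exists>P Q :: real poly. degree P \<le> 2 * n + 1 \<and> degree Q \<le> (n - 1) div 2 \<and>
    (\<forall>u::real. u > 0 \<longrightarrow>
       Mfun n a b (u ^ 4 + u ^ 2) =
         u * poly P u + (u ^ 4 + u ^ 2) * poly Q (u ^ 4 + u ^ 2) *
           integral {0..1 / sqrt (1 + u ^ 2)} (\<lambda>t. sqrt (1 - t ^ 2)))"
proof -
  obtain R Q1 Q2 where G: "degree R \<le> 2*(n+1)" "poly R 0 = 0" "degree Q1 \<le> (n+1) div 2 - 1"
     "degree Q2 \<le> (n+1) div 2 - 1" "\<forall>u>0. Mfun n a b (u^4+u^2) = poly R u + (u^4+u^2) * poly Q1 (u^4+u^2) * arctan u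
        + (u^4+u^2) * poly Q2 (u^4+u^2)" using M_good[of n a b] unfolding good_def by blast
  obtain P where dP: "degree P \<le> 2*n+1" and uP: "\<And>u. u * poly P u = poly R u + (u^4+u^2) * poly Q1 (u^4+u^2) * (pi/2)
      + u^3 * poly Q1 (u^4+u^2) + (u^4+u^2) * poly Q2 (u^4+u^2)"
    using deg_part[OF assms G(1-4)] by blast
  have dQ: "degree (smult (-2) Q1) \<le> (n-1) div 2"
  proof -
    have "(n+1) div 2 - 1 = (n-1) div 2" using assms by auto
    then show ?thesis using G(3) by simp
  qed
  have eq: "Mfun n a b (u^4+u^2) = u * poly P u + (u^4+u^2) * poly (smult (-2) Q1) (u^4+u^2) *
           integral {0..1 / sqrt (1 + u ^ 2)} (\<lambda>t. sqrt (1 - t ^ 2))" if u: "u > 0" for u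
  proof -
    define I where "I = integral {0..1 / sqrt (1 + u ^ 2)} (\<lambda>t. sqrt (1 - t ^ 2))"
    have pos1: "0 < 1 + u^2" by (simp add: add_pos_nonneg)
    have e2: "2*((pi/2 - arctan u)/2 + u/(2*(1+u^2))) = pi/2 - arctan u + u/(1+u^2)" using pos1 by (simp add: field_simps)
    have al: "arctan u = pi/2 + u/(1+u^2) - 2 * I" unfolding I_def I_val[OF u] using e2 by linarith
    have hu: "(u^4+u^2) * (u/(1+u^2)) = u^3" using pos1 by (simp add: field_simps power2_eq_square power3_eq_cube power4_eq_xxxx)
    define B where "B = u/(1+u^2)"
    define h where "h = u^4+u^2"
    have hu': "h * poly Q1 h * B = u^3 * poly Q1 h" using hu unfolding B_def h_def by (metis mult.commute mult.left_commute)
    have ex: "h * poly Q1 h * (pi/2 + B - 2 * I) = h * poly Q1 h * (pi/2) + h * poly Q1 h * B - 2 * (h * poly Q1 h * I)"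
      by (simp add: algebra_simps)
    have "Mfun n a b (u^4+u^2) = poly R u + h * poly Q1 h * (pi/2 + B - 2 * I)
        + h * poly Q2 h" using G(5) u al unfolding B_def h_def by simp
    also have "\<dots> = u * poly P u + (u^4+u^2) * poly (smult (-2) Q1) (u^4+u^2) * I"
      unfolding uP ex hu' by (simp add: algebra_simps h_def)
    finally show ?thesis unfolding I_def .
  qed
  show ?thesis using dP dQ eq by blast
qed

end
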